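(* Let $\ell,n$ be integers with $0<\ell\le n$, and let $\mathcal H$ be a set of intervals that is $\ell$-powerful in $(0,n)$ and is minimal with this property (no proper subset of $\mathcal H$ is $\ell$-powerful in $(0,n)$). Then, writing $\mathcal H=\{(a_i,b_i):1\le i\le t\}$ in standard form, we have $a_j\ge b_i-\ell+2$ for all $i,j\in\{1,\dots,t\}$ with $j\ge i+2$.
   Context: An interval is a pair $(a,b)$ of integers with $a\le b$; its length is $b-a$. An interval $(a,b)$ captures $(c,d)$ if $a\le c\le d\le b$; a set $\mathcal H$ of intervals captures $(c,d)$ if some member of $\mathcal H$ captures $(c,d)$. For integers $0<\ell\le n$, a set $\mathcal H$ of intervals is $\ell$-powerful in $(0,n)$ if $0\le a\le b\le n$ for all $(a,b)\in\mathcal H$, and $\mathcal H$ captures every interval of length $\ell$ that is captured by $(0,n)$ (i.e. every $(h,h+\ell)$ with $0\le h\le n-\ell$). A standard form of a set $\mathcal H$ of intervals is an expression $\mathcal H=\{(a_i,b_i):1\le i\le t\}$ with $t\ge 1$, $0\le a_1<a_2<\dots<a_t\le n$ and $0\le b_1<b_2<\dots<b_t\le n$; such a form exists if and only if no member of $\mathcal H$ captures another distinct member. *)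

theory Defs
  imports Main
begin

definition is_interval :: "int \<times> int \<Rightarrow> bool" where
  "is_interval I \<longleftrightarrow> fst I \<le> snd I"

definition captures :: "int \<times> int \<Rightarrow> int \<times> int \<Rightarrow> bool" where
  "captures I J \<longleftrightarrow> fst I \<le> fst J \<and> fst J \<le> snd J \<and> snd J \<le> snd I"

definition set_captures :: "(int \<times> int) set \<Rightarrow> int \<times> int \<Rightarrow> bool" where
  "set_captures H J \<longleftrightarrow> (\<exists>I\<in>H. captures I J)"

definition powerful :: "int \<Rightarrow> int \<Rightarrow> (int \<times> int) set \<Rightarrow> bool" where
  "powerful l n H \<longleftrightarrow>
     (\<forall>(a,b)\<in>H. 0 \<le> a \<and> a \<le> b \<and> b \<le> n) \<and>
     (\<forall>h. 0 \<le> h \<and> h \<le> n - l \<longrightarrow> set_captures H (h, h + l))"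

definition minimal_powerful :: "int \<Rightarrow> int \<Rightarrow> (int \<times> int) set \<Rightarrow> bool" where
  "minimal_powerful l n H \<longleftrightarrow> powerful l n H \<and> (\<forall>H'. H' \<subset> H \<longrightarrow> \<not> powerful l n H')"

definition standard_form :: "int \<Rightarrow> (int \<times> int) set \<Rightarrow> nat \<Rightarrow> (nat \<Rightarrow> int) \<Rightarrow> (nat \<Rightarrow> int) \<Rightarrow> bool" where
  "standard_form n H t a b \<longleftrightarrow>
     t \<ge> 1 \<and> H = (\<lambda>i. (a i, b i)) ` {1..t} \<and>
     0 \<le> a 1 \<and> strict_mono_on {1..t} a \<and> a t \<le> n \<and>
     0 \<le> b 1 \<and> strict_mono_on {1..t} b \<and> b t \<le> n"

end

theory Submission
  imports Defs
begin

lemma remove_contra: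
  assumes m: "minimal_powerful l n H" and J: "J \<in> H"
    and c: "\<And>h. 0 \<le> h \<Longrightarrow> h \<le> n - l \<Longrightarrow> captures J (h,h+l) \<Longrightarrow> set_captures (H-{J}) (h,h+l)"
  shows False
proof -
  have p: "powerful l n H" and mm: "\<forall>H'. H' \<subset> H \<longrightarrow> \<not> powerful l n H'"
    using m unfolding minimal_powerful_def by auto
  have "powerful l n (H - {J})"
    unfolding powerful_def
  proof (intro conjI allI impI)
    show "\<forall>(a, b)\<in>H - {J}. 0 \<le> a \<and> a \<le> b \<and> b \<le> n" using p unfolding powerful_def by auto
  next
    fix h assume h: "0 \<le> h \<and> h \<le> n - l"
    then obtain K where K: "K \<in> H" "captures K (h,h+l)" using p unfolding powerful_def set_captures_def by blast
    show "set_captures (H - {J}) (h, h + l)"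
    proof (cases "K = J")
      case True thus ?thesis using c h K by auto
    next
      case False thus ?thesis using K unfolding set_captures_def by auto
    qed
  qed
  moreover have "H - {J} \<subset> H" using J by auto
  ultimately show False using mm by blast
qed

lemma no_capture:
  assumes m: "minimal_powerful l n H" and I: "I \<in> H" and J: "J \<in> H" and c: "captures I J"
  shows "I = J"
proof (rule ccontr)
  assume ne: "I \<noteq> J"
  show False
  proof (rule remove_contra[OF m J])
    fix h assume "captures J (h, h + l)"
    hence "captures I (h,h+l)" using c unfolding captures_def by auto
    thus "set_captures (H - {J}) (h, h + l)" using I ne unfolding set_captures_def by auto
  qed
qed

lemma part2:
  assumes m: "minimal_powerful l n H" and sf: "standard_form n H t a b"
    and ij: "1 \<le> i" "i \<le> t" "1 \<le> j" "j \<le> t" "j \<ge> i + 2"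
  shows "a j \<ge> b i - l + 2"
proof (rule ccontr)
  assume neg: "\<not> a j \<ge> b i - l + 2"
  have Hdef: "H = (\<lambda>i. (a i, b i)) ` {1..t}" and sa: "strict_mono_on {1..t} a"
    and sb: "strict_mono_on {1..t} b" using sf unfolding standard_form_def by auto
  have i1: "i+1 \<in> {1..t}" "i \<in> {1..t}" "j \<in> {1..t}" using ij by auto
  have lt: "i < i+1" "i+1 < j" using ij by auto
  have a1: "a i < a (i+1)" "a (i+1) < a j" using sa i1 lt by (auto simp: strict_mono_on_def)
  have b1: "b i < b (i+1)" "b (i+1) < b j" using sb i1 lt by (auto simp: strict_mono_on_def)
  have JH: "(a (i+1), b (i+1)) \<in> H" using Hdef i1 by auto
  have IH: "(a i, b i) \<in> H" "(a j, b j) \<in> H" using Hdef i1 by auto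
  show False
  proof (rule remove_contra[OF m JH])
    fix h assume c: "captures (a (i+1), b (i+1)) (h, h + l)"
    show "set_captures (H - {(a (i+1), b (i+1))}) (h, h + l)"
    proof (cases "h + l \<le> b i")
      case True
      hence "captures (a i, b i) (h,h+l)" using c a1 unfolding captures_def by auto
      thus ?thesis using IH a1 unfolding set_captures_def by force
    next
      case False
      hence "captures (a j, b j) (h,h+l)" using c b1 neg unfolding captures_def by auto
      thus ?thesis using IH a1 unfolding set_captures_def by force
    qed
  qed
qed

lemma part1:
  assumes m: "minimal_powerful l n H" and l: "l \<le> n" "0 < l"
  shows "\<exists>t a b. standard_form n H t a b"
proof -
  have p: "powerful l n H" using m unfolding minimal_powerful_def by auto
  have bnd: "\<And>x y. (x,y) \<in> H \<Longrightarrow> 0 \<le> x \<and> x \<le> y \<and> y \<le> n" using p unfolding powerful_def by auto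
  have "H \<subseteq> {0..n} \<times> {0..n}" using bnd by fastforce
  hence finH: "finite H" by (rule finite_subset) auto
  obtain K where K: "K \<in> H" using p l unfolding powerful_def set_captures_def by fastforce
  define A where "A = fst ` H"
  have finA: "finite A" using finH A_def by auto
  have uniq: "\<And>x y y'. (x,y) \<in> H \<Longrightarrow> (x,y') \<in> H \<Longrightarrow> y = y'"
  proof -
    fix x y y' assume h: "(x,y) \<in> H" "(x,y') \<in> H"
    show "y = y'"
    proof (cases "y \<le> y'")
      case True
      hence "captures (x,y') (x,y)" using bnd[OF h(1)] unfolding captures_def by auto
      thus ?thesis using no_capture[OF m h(2) h(1)] by auto
    next
      case False
      hence "captures (x,y) (x,y')" using bnd[OF h(2)] unfolding captures_def by auto
      thus ?thesis using no_capture[OF m h(1) h(2)] by auto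
    qed
  qed
  define f where "f x = (THE y. (x,y) \<in> H)" for x
  have fH: "\<And>x. x \<in> A \<Longrightarrow> (x, f x) \<in> H"
  proof -
    fix x assume "x \<in> A"
    then obtain y where y: "(x,y) \<in> H" unfolding A_def by force
    have "f x = y" unfolding f_def using y uniq by blast
    thus "(x, f x) \<in> H" using y by simp
  qed
  have Heq: "H = (\<lambda>x. (x, f x)) ` A"
  proof
    show "H \<subseteq> (\<lambda>x. (x, f x)) ` A"
    proof
      fix z assume z: "z \<in> H"
      obtain x y where zz: "z = (x,y)" by force
      have xA: "x \<in> A" using z zz A_def by force
      have "f x = y" using uniq fH[OF xA] z zz by blast
      thus "z \<in> (\<lambda>x. (x, f x)) ` A" using xA zz by force
    qed
  next
    show "(\<lambda>x. (x, f x)) ` A \<subseteq> H" using fH by auto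
  qed
  have fmono: "\<And>x x'. x \<in> A \<Longrightarrow> x' \<in> A \<Longrightarrow> x < x' \<Longrightarrow> f x < f x'"
  proof (rule ccontr)
    fix x x' assume h: "x \<in> A" "x' \<in> A" "x < x'" "\<not> f x < f x'"
    have "captures (x, f x) (x', f x')" using h bnd[OF fH[OF h(2)]] unfolding captures_def by auto
    thus False using no_capture[OF m fH[OF h(1)] fH[OF h(2)]] h by auto
  qed
  define xs where "xs = sorted_list_of_set A"
  define t where "t = length xs"
  have setxs: "set xs = A" using finA xs_def by auto
  have swt: "sorted_wrt (<) xs" using xs_def by simp
  have Ane: "A \<noteq> {}" using K A_def by auto
  have t1: "t \<ge> 1" using setxs Ane t_def by (cases xs) auto
  define a where "a i = xs ! (i - 1)" for i
  define b where "b i = f (a i)" for i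
  have aimg: "a ` {1..t} = A"
  proof -
    have "a ` {1..t} = (\<lambda>k. xs ! k) ` {0..<t}"
    proof
      show "a ` {1..t} \<subseteq> (!) xs ` {0..<t}" unfolding a_def by (auto simp: image_iff, force)
      show "(!) xs ` {0..<t} \<subseteq> a ` {1..t}"
      proof
        fix z assume "z \<in> (!) xs ` {0..<t}"
        then obtain k where "k < t" "z = xs ! k" by auto
        thus "z \<in> a ` {1..t}" unfolding a_def by (intro image_eqI[of _ _ "k+1"]) auto
      qed
    qed
    also have "\<dots> = set xs" unfolding t_def by (auto simp: in_set_conv_nth)
    finally show ?thesis using setxs by simp
  qed
  have aA: "\<And>i. i \<in> {1..t} \<Longrightarrow> a i \<in> A" using aimg by auto
  have sa: "strict_mono_on {1..t} a"
    unfolding strict_mono_on_def a_def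
  proof (intro allI impI)
    fix r s assume "r \<in> {1..t} \<and> s \<in> {1..t} \<and> r < s"
    thus "xs ! (r - 1) < xs ! (s - 1)" using swt t_def by (auto intro: sorted_wrt_nth_less)
  qed
  have sb: "strict_mono_on {1..t} b"
    unfolding strict_mono_on_def b_def
  proof (intro allI impI)
    fix r s assume h0: "r \<in> {1..t} \<and> s \<in> {1..t} \<and> r < s"
    hence h: "r \<in> {1..t}" "s \<in> {1..t}" "r < s" by auto
    hence "a r < a s" using sa by (auto simp: strict_mono_on_def)
    thus "f (a r) < f (a s)" using fmono aA h by auto
  qed
  have HH: "H = (\<lambda>i. (a i, b i)) ` {1..t}"
    unfolding Heq b_def aimg[symmetric] by auto
  have m1: "1 \<in> {1..t}" "t \<in> {1..t}" using t1 by auto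
  have "0 \<le> a 1 \<and> a 1 \<le> b 1" "b t \<le> n" "a t \<le> b t"
    using bnd[OF fH[OF aA[OF m1(1)]]] bnd[OF fH[OF aA[OF m1(2)]]] b_def by auto
  hence "standard_form n H t a b" unfolding standard_form_def using t1 HH sa sb by auto
  thus ?thesis by blast
qed

theorem mainTheorem4:
  fixes l n :: int and H :: "(int \<times> int) set"
  assumes "0 < l" and "l \<le> n"
    and "\<forall>I\<in>H. is_interval I"
    and "minimal_powerful l n H"
  shows "(\<exists>t a b. standard_form n H t a b) \<and>
         (\<forall>t a b. standard_form n H t a b \<longrightarrow>
            (\<forall>i j. 1 \<le> i \<and> i \<le> t \<and> 1 \<le> j \<and> j \<le> t \<and> j \<ge> i + 2 \<longrightarrow>
               a j \<ge> b i - l + 2))"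
  using part1[OF assms(4) assms(2) assms(1)] part2[OF assms(4)] by blast

end
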